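(* Let $(S,\mathcal C)$ be a connected connectoid and $T$ a weak normal tree of $(S,\mathcal C)$. Then a component $K\in\mathcal K(S\setminus V(T))$ has finite adhesion to $V(T)$ if and only if $N_K$ is finite.
   Context: A connectoid is given by a set $S$ and a set $\mathcal F$ of finite subsets of $S$ such that (i) $F\cup F'\in\mathcal F$ whenever $F,F'\in\mathcal F$ and $F\cap F'\neq\emptyset$, and (ii) $\emptyset\in\mathcal F$ and $\{s\}\in\mathcal F$ for every $s\in S$. A set $C\subseteq S$ is connected if for all $x,y\in C$ there is $F\in\mathcal F$ with $F\subseteq C$ and $x,y\in F$; $\mathcal C$ is the set of connected sets; $(S,\mathcal C)$ is connected if $S\in\mathcal C$. For $S'\subseteq S$, a component of $S'$ is a maximal connected subset, and $\mathcal K(S')$ is the set of components of $S'$. For $\hat S\subseteq S$, a component $K\in\mathcal K(S\setminus\hat S)$ has finite adhesion to $\hat S$ if there is a finite $X\subseteq\hat S$ with $K\in\mathcal K(S\setminus X)$. For a rooted tree $T$ with tree order $\le_T$ and $t\in V(T)$, let $\mathrm{Down}^\circ_T(t)=\{x\in V(T):x<_T t\}$ and let $K_t^T$ be the element of $\mathcal K(S\setminus\mathrm{Down}^\circ_T(t))$ containing $t$. A weak normal tree of $(S,\mathcal C)$ is a rooted undirected tree $T$ with $V(T)\subseteq S$ such that (1) for every $C\in\mathcal C$ and every two $\le_T$-incomparable $u,v\in C\cap V(T)$ there is $w\in C$ with $w\le_T u$ and $w\le_T v$, and (2) for all $u\le_T v$ in $V(T)$ there is $C\in\mathcal C$ containing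 $u,v$ with $C\cap\mathrm{Down}^\circ_T(u)=\emptyset$. For $K\in\mathcal K(S\setminus V(T))$, $N_K:=\{t\in V(T):K\subseteq K_t^T\}$. *)

theory Defs
  imports Main
begin

definition connectoid :: "'a set \<Rightarrow> 'a set set \<Rightarrow> bool" where
  "connectoid S F \<longleftrightarrow>
     (\<forall>X\<in>F. X \<subseteq> S \<and> finite X) \<and>
     (\<forall>X\<in>F. \<forall>Y\<in>F. X \<inter> Y \<noteq> {} \<longrightarrow> X \<union> Y \<in> F) \<and>
     {} \<in> F \<and> (\<forall>s\<in>S. {s} \<in> F)"

definition conn_sets :: "'a set \<Rightarrow> 'a set set \<Rightarrow> 'a set set" where
  "conn_sets S F = {C. C \<subseteq> S \<and> (\<forall>x\<in>C. \<forall>y\<in>C. \<exists>X\<in>F. X \<subseteq> C \<and> x \<in> X \<and> y \<in> X)}"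

definition comps :: "'a set \<Rightarrow> 'a set set \<Rightarrow> 'a set \<Rightarrow> 'a set set" where
  "comps S F S' = {K. K \<noteq> {} \<and> K \<subseteq> S' \<and> K \<in> conn_sets S F \<and>
      (\<forall>K'. K \<subseteq> K' \<and> K' \<subseteq> S' \<and> K' \<in> conn_sets S F \<longrightarrow> K' = K)}"

definition finite_adhesion :: "'a set \<Rightarrow> 'a set set \<Rightarrow> 'a set \<Rightarrow> 'a set \<Rightarrow> bool" where
  "finite_adhesion S F Sh K \<longleftrightarrow> (\<exists>X. X \<subseteq> Sh \<and> finite X \<and> K \<in> comps S F (S - X))"

definition is_walk :: "'a set \<Rightarrow> ('a \<Rightarrow> 'a \<Rightarrow> bool) \<Rightarrow> 'a list \<Rightarrow> bool" where
  "is_walk V E p \<longleftrightarrow> p \<noteq> [] \<and> set p \<subseteq> V \<and> (\<forall>i. Suc i < length p \<longrightarrow> E (p ! i) (p ! Suc i))"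

definition is_tree :: "'a set \<Rightarrow> ('a \<Rightarrow> 'a \<Rightarrow> bool) \<Rightarrow> bool" where
  "is_tree V E \<longleftrightarrow>
     (\<forall>x y. E x y \<longrightarrow> x \<in> V \<and> y \<in> V \<and> x \<noteq> y \<and> E y x) \<and>
     (\<forall>x\<in>V. \<forall>y\<in>V. \<exists>p. is_walk V E p \<and> hd p = x \<and> last p = y) \<and>
     \<not> (\<exists>p. is_walk V E p \<and> distinct p \<and> length p \<ge> 3 \<and> E (last p) (hd p))"

definition rooted_tree :: "'a set \<Rightarrow> ('a \<Rightarrow> 'a \<Rightarrow> bool) \<Rightarrow> 'a \<Rightarrow> bool" where
  "rooted_tree V E r \<longleftrightarrow> is_tree V E \<and> r \<in> V"

definition tree_le :: "'a set \<Rightarrow> ('a \<Rightarrow> 'a \<Rightarrow> bool) \<Rightarrow> 'a \<Rightarrow> 'a \<Rightarrow> 'a \<Rightarrow> bool" where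
  "tree_le V E r u v \<longleftrightarrow>
     (\<exists>p. is_walk V E p \<and> distinct p \<and> hd p = r \<and> last p = v \<and> u \<in> set p)"

definition tree_lt :: "'a set \<Rightarrow> ('a \<Rightarrow> 'a \<Rightarrow> bool) \<Rightarrow> 'a \<Rightarrow> 'a \<Rightarrow> 'a \<Rightarrow> bool" where
  "tree_lt V E r u v \<longleftrightarrow> tree_le V E r u v \<and> u \<noteq> v"

definition down_open :: "'a set \<Rightarrow> ('a \<Rightarrow> 'a \<Rightarrow> bool) \<Rightarrow> 'a \<Rightarrow> 'a \<Rightarrow> 'a set" where
  "down_open V E r t = {x\<in>V. tree_lt V E r x t}"

definition weak_normal_tree ::
  "'a set \<Rightarrow> 'a set set \<Rightarrow> 'a set \<Rightarrow> ('a \<Rightarrow> 'a \<Rightarrow> bool) \<Rightarrow> 'a \<Rightarrow> bool" where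
  "weak_normal_tree S F V E r \<longleftrightarrow>
     rooted_tree V E r \<and> V \<subseteq> S \<and>
     (\<forall>C\<in>conn_sets S F. \<forall>u\<in>C \<inter> V. \<forall>v\<in>C \<inter> V.
        \<not> tree_le V E r u v \<and> \<not> tree_le V E r v u \<longrightarrow>
        (\<exists>w\<in>C. tree_le V E r w u \<and> tree_le V E r w v)) \<and>
     (\<forall>u\<in>V. \<forall>v\<in>V. tree_le V E r u v \<longrightarrow>
        (\<exists>C\<in>conn_sets S F. u \<in> C \<and> v \<in> C \<and> C \<inter> down_open V E r u = {}))"

definition K_tree ::
  "'a set \<Rightarrow> 'a set set \<Rightarrow> 'a set \<Rightarrow> ('a \<Rightarrow> 'a \<Rightarrow> bool) \<Rightarrow> 'a \<Rightarrow> 'a \<Rightarrow> 'a set" where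
  "K_tree S F V E r t = (THE K. K \<in> comps S F (S - down_open V E r t) \<and> t \<in> K)"

definition N_K ::
  "'a set \<Rightarrow> 'a set set \<Rightarrow> 'a set \<Rightarrow> ('a \<Rightarrow> 'a \<Rightarrow> bool) \<Rightarrow> 'a \<Rightarrow> 'a set \<Rightarrow> 'a set" where
  "N_K S F V E r K = {t\<in>V. K \<subseteq> K_tree S F V E r t}"

end

theory Submission
  imports Defs
begin


lemma walk_single: "is_walk V E [x] \<longleftrightarrow> x \<in> V"
  by (simp add: is_walk_def)

lemma walk_Cons2: "is_walk V E (x # y # xs) \<longleftrightarrow> x \<in> V \<and> E x y \<and> is_walk V E (y # xs)"
proof
  assume w: "is_walk V E (x # y # xs)"
  have "E ((x#y#xs)!0) ((x#y#xs)!Suc 0)" using w unfolding is_walk_def by fastforce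
  moreover have "\<forall>i. Suc i < length (y#xs) \<longrightarrow> E ((y#xs) ! i) ((y#xs) ! Suc i)"
  proof (intro allI impI)
    fix i assume "Suc i < length (y#xs)"
    then have "Suc (Suc i) < length (x#y#xs)" by simp
    then have "E ((x#y#xs) ! Suc i) ((x#y#xs) ! Suc (Suc i))" using w unfolding is_walk_def by blast
    then show "E ((y#xs) ! i) ((y#xs) ! Suc i)" by simp
  qed
  ultimately show "x \<in> V \<and> E x y \<and> is_walk V E (y # xs)" using w unfolding is_walk_def by auto
next
  assume h: "x \<in> V \<and> E x y \<and> is_walk V E (y # xs)"
  show "is_walk V E (x # y # xs)" unfolding is_walk_def
  proof (intro conjI allI impI)
    fix i assume "Suc i < length (x#y#xs)"
    then show "E ((x#y#xs) ! i) ((x#y#xs) ! Suc i)"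
      using h unfolding is_walk_def by (cases i) auto
  qed (use h in \<open>auto simp: is_walk_def\<close>)
qed

lemma walk_append:
  assumes "xs \<noteq> []" "ys \<noteq> []"
  shows "is_walk V E (xs @ ys) \<longleftrightarrow> is_walk V E xs \<and> is_walk V E ys \<and> E (last xs) (hd ys)"
  using assms
proof (induction xs)
  case Nil then show ?case by simp
next
  case (Cons x xs)
  show ?case
  proof (cases xs)
    case Nil
    then show ?thesis using Cons.prems by (cases ys) (auto simp: walk_Cons2 walk_single)
  next
    case (Cons z zs)
    then show ?thesis using Cons.IH Cons.prems by (auto simp: walk_Cons2)
  qed
qed

lemma walk_rev:
  assumes sym: "\<And>x y. E x y \<Longrightarrow> E y x" and w: "is_walk V E p"
  shows "is_walk V E (rev p)"
  using w
proof (induction p)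
  case Nil then show ?case by (simp add: is_walk_def)
next
  case (Cons x xs)
  show ?case
  proof (cases xs)
    case Nil then show ?thesis using Cons.prems by simp
  next
    case (Cons z zs)
    with Cons.prems have "is_walk V E xs" "E x z" "x \<in> V" by (auto simp: walk_Cons2)
    then show ?thesis using Cons.IH Cons walk_append[of "rev xs" "[x]" V E]
      by (auto simp: walk_single sym last_rev)
  qed
qed


lemma walk_prefix: "is_walk V E (xs @ ys) \<Longrightarrow> xs \<noteq> [] \<Longrightarrow> is_walk V E xs"
  by (cases "ys = []") (auto simp: walk_append)

lemma walk_suffix: "is_walk V E (xs @ ys) \<Longrightarrow> ys \<noteq> [] \<Longrightarrow> is_walk V E ys"
  by (cases "xs = []") (auto simp: walk_append)

lemma tree_sym: "is_tree V E \<Longrightarrow> E x y \<Longrightarrow> E y x"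
  unfolding is_tree_def by blast

lemma no_fork:
  assumes tree: "is_tree V E"
    and wp: "is_walk V E (a#p')" and dp: "distinct (a#p')"
    and wq: "is_walk V E (a#q')" and dq: "distinct (a#q')"
    and ne: "p' \<noteq> []" "q' \<noteq> []" and hne: "hd p' \<noteq> hd q'" and l: "last p' = last q'"
  shows False
proof -
  have sym: "\<And>x y. E x y \<Longrightarrow> E y x" using tree tree_sym by metis
  have "\<exists>x\<in>set p'. x \<in> set q'" using ne l by (metis last_in_set)
  then obtain u1 z u2 where p': "p' = u1 @ z # u2" and zq: "z \<in> set q'" and u1: "\<forall>y\<in>set u1. y \<notin> set q'"
    by (rule split_list_first_propE)
  obtain v1 v2 where q': "q' = v1 @ z # v2" using zq by (meson split_list)
  have noncyc: "\<not> (\<exists>p. is_walk V E p \<and> distinct p \<and> length p \<ge> 3 \<and> E (last p) (hd p))"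
    using tree unfolding is_tree_def by blast
  have w1: "is_walk V E (a # u1 @ [z])"
    using wp p' walk_prefix[of V E "a # u1 @ [z]" u2] by simp
  have d1: "distinct (a # u1 @ [z])" using dp p' by auto
  show False
  proof (cases "v1 = []")
    case True
    then have hq: "hd q' = z" using q' by simp
    then have "u1 \<noteq> []" using hne p' by auto
    then have len: "length (a # u1 @ [z]) \<ge> 3" by (cases u1) auto
    have "E a z" using wq q' True by (simp add: walk_Cons2)
    then have "E (last (a # u1 @ [z])) (hd (a # u1 @ [z]))" using sym by simp
    then show False using noncyc w1 d1 len by blast
  next
    case False
    define c where "c = (a # u1 @ [z]) @ rev v1"
    have wv1: "is_walk V E v1" using wq q' False walk_prefix[of V E v1 "z # v2"]
      walk_suffix[of V E "[a]" "v1 @ z # v2"] by simp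
    have "E (last v1) z" using wq q' False walk_append[of v1 "z#v2" V E]
      walk_suffix[of V E "[a]" "v1 @ z # v2"] by simp
    then have e1: "E (last (a # u1 @ [z])) (hd (rev v1))" using sym False by (simp add: hd_rev)
    have wc: "is_walk V E c" unfolding c_def
      using walk_append[of "a # u1 @ [z]" "rev v1" V E] w1 walk_rev[OF sym wv1] e1 False by simp
    have dc: "distinct c" unfolding c_def using d1 dq q' u1 p' dp by auto
    have lc: "length c \<ge> 3" unfolding c_def using False by (cases v1) auto
    have "E a (hd v1)" using wq q' False by (cases v1) (auto simp: walk_Cons2)
    then have "E (last c) (hd c)" unfolding c_def using sym False by (simp add: last_rev)
    then show False using noncyc wc dc lc by blast
  qed
qed

lemma path_unique:
  assumes tree: "is_tree V E"
  shows "is_walk V E p \<Longrightarrow> distinct p \<Longrightarrow> is_walk V E q \<Longrightarrow> distinct q \<Longrightarrow> hd p = hd q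
    \<Longrightarrow> last p = last q \<Longrightarrow> p = q"
proof (induction p arbitrary: q)
  case Nil then show ?case by (simp add: is_walk_def)
next
  case (Cons a p')
  obtain b q' where q: "q = b # q'" using Cons.prems by (cases q) (auto simp: is_walk_def)
  have b: "b = a" using Cons.prems q by simp
  show ?case
  proof (cases "p' = []")
    case True
    then have "last q = a" using Cons.prems by simp
    then have "q' = []" using Cons.prems q b by (metis distinct.simps(2) last_ConsR last_in_set)
    then show ?thesis using True q b by simp
  next
    case pne: False
    show ?thesis
    proof (cases "q' = []")
      case True
      then have "last (a # p') = a" using Cons.prems q b by simp
      then show ?thesis using Cons.prems pne by (metis distinct.simps(2) last_ConsR last_in_set)
    next
      case qne: False
      have wp': "is_walk V E p'" using Cons.prems pne walk_suffix[of V E "[a]" p'] by simp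
      have wq': "is_walk V E q'" using Cons.prems qne q walk_suffix[of V E "[b]" q'] by simp
      have lst: "last p' = last q'" using Cons.prems q pne qne by simp
      show ?thesis
      proof (cases "hd p' = hd q'")
        case True
        then have "p' = q'" using Cons.IH[OF wp' _ wq' _ True lst] Cons.prems q by simp
        then show ?thesis using q b by simp
      next
        case False
        then show ?thesis using no_fork[OF tree, of a p' q'] Cons.prems q b pne qne lst by simp
      qed
    qed
  qed
qed



definition rpath :: "'a set \<Rightarrow> ('a \<Rightarrow> 'a \<Rightarrow> bool) \<Rightarrow> 'a \<Rightarrow> 'a \<Rightarrow> 'a list" where
  "rpath V E r v = (THE p. is_walk V E p \<and> distinct p \<and> hd p = r \<and> last p = v)"

lemma rpath_eq:
  assumes "is_tree V E" "is_walk V E p" "distinct p" "hd p = r" "last p = v"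
  shows "rpath V E r v = p"
  unfolding rpath_def
proof (rule the_equality)
  show "is_walk V E p \<and> distinct p \<and> hd p = r \<and> last p = v" using assms by blast
next
  fix q assume "is_walk V E q \<and> distinct q \<and> hd q = r \<and> last q = v"
  then show "q = p" using path_unique[OF assms(1), of q p] assms by simp
qed

lemma tree_le_V: "tree_le V E r u v \<Longrightarrow> u \<in> V"
  unfolding tree_le_def is_walk_def by blast

lemma tree_le_finite:
  assumes "is_tree V E"
  shows "finite {u. tree_le V E r u v}"
proof (cases "\<exists>p. is_walk V E p \<and> distinct p \<and> hd p = r \<and> last p = v")
  case True
  then obtain p where p: "is_walk V E p" "distinct p" "hd p = r" "last p = v" by blast
  have "{u. tree_le V E r u v} \<subseteq> set p"
  proof
    fix u assume "u \<in> {u. tree_le V E r u v}"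
    then obtain q where q: "is_walk V E q" "distinct q" "hd q = r" "last q = v" "u \<in> set q"
      unfolding tree_le_def by blast
    have "q = p" using path_unique[OF assms, of q p] q p by simp
    then show "u \<in> set p" using q by simp
  qed
  then show ?thesis by (rule finite_subset) simp
next
  case False
  then have "{u. tree_le V E r u v} = {}" unfolding tree_le_def by blast
  then show ?thesis by simp
qed

lemma tree_lt_depth:
  assumes tree: "is_tree V E" and lt: "tree_lt V E r u v"
  shows "length (rpath V E r u) < length (rpath V E r v)"
proof -
  obtain p where p: "is_walk V E p" "distinct p" "hd p = r" "last p = v" "u \<in> set p"
    and uv: "u \<noteq> v"
    using lt unfolding tree_lt_def tree_le_def by blast
  obtain p1 p2 where sp: "p = p1 @ u # p2" using p(5) by (meson split_list)
  have "p2 \<noteq> []" using sp p(4) uv by auto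
  have w1: "is_walk V E (p1 @ [u])" using p(1) sp walk_prefix[of V E "p1 @ [u]" p2] by simp
  have d1: "distinct (p1 @ [u])" using p(2) sp by simp
  have h1: "hd (p1 @ [u]) = r" using p(3) sp by (cases p1) auto
  have "rpath V E r u = p1 @ [u]" using rpath_eq[OF tree w1 d1 h1] by simp
  moreover have "rpath V E r v = p" using rpath_eq[OF tree p(1-4)] .
  ultimately show ?thesis using sp \<open>p2 \<noteq> []\<close> by simp
qed


lemma conn_setsD: "C \<in> conn_sets S F \<Longrightarrow> x \<in> C \<Longrightarrow> y \<in> C \<Longrightarrow> \<exists>X\<in>F. X \<subseteq> C \<and> x \<in> X \<and> y \<in> X"
  unfolding conn_sets_def by blast

lemma conn_sets_sub: "C \<in> conn_sets S F \<Longrightarrow> C \<subseteq> S"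
  unfolding conn_sets_def by blast

lemma conn_union:
  assumes "connectoid S F" "A \<in> conn_sets S F" "B \<in> conn_sets S F" "A \<inter> B \<noteq> {}"
  shows "A \<union> B \<in> conn_sets S F"
proof -
  obtain c where c: "c \<in> A" "c \<in> B" using assms(4) by blast
  have un: "\<And>X Y. X \<in> F \<Longrightarrow> Y \<in> F \<Longrightarrow> X \<inter> Y \<noteq> {} \<Longrightarrow> X \<union> Y \<in> F"
    using assms(1) unfolding connectoid_def by blast
  have key: "\<exists>X\<in>F. X \<subseteq> A \<union> B \<and> x \<in> X \<and> y \<in> X"
    if h: "x \<in> A" "y \<in> B" "A \<in> conn_sets S F" "B \<in> conn_sets S F" "c \<in> A" "c \<in> B" for x y A B
  proof -
    obtain X1 where X1: "X1 \<in> F" "X1 \<subseteq> A" "x \<in> X1" "c \<in> X1" using h conn_setsD by metis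
    obtain X2 where X2: "X2 \<in> F" "X2 \<subseteq> B" "c \<in> X2" "y \<in> X2" using h conn_setsD by metis
    have "X1 \<union> X2 \<in> F" using un X1 X2 by blast
    moreover have "X1 \<union> X2 \<subseteq> A \<union> B" using X1 X2 by blast
    ultimately show ?thesis using X1 X2 by (intro bexI[of _ "X1 \<union> X2"]) auto
  qed
  show ?thesis unfolding conn_sets_def
  proof (intro CollectI conjI ballI)
    show "A \<union> B \<subseteq> S" using conn_sets_sub[OF assms(2)] conn_sets_sub[OF assms(3)] by blast
  next
    fix x y assume xy: "x \<in> A \<union> B" "y \<in> A \<union> B"
    show "\<exists>X\<in>F. X \<subseteq> A \<union> B \<and> x \<in> X \<and> y \<in> X"
    proof (cases "x \<in> A")
      case xA: True
      show ?thesis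
      proof (cases "y \<in> A")
        case True then show ?thesis using conn_setsD[OF assms(2) xA True] by (auto intro: bexI)
      next
        case False then have "y \<in> B" using xy by blast
        then show ?thesis using key[OF xA _ assms(2,3) c] by simp
      qed
    next
      case xB: False
      then have xB: "x \<in> B" using xy by blast
      show ?thesis
      proof (cases "y \<in> B")
        case True then show ?thesis using conn_setsD[OF assms(3) xB True] by (auto intro: bexI)
      next
        case False then have "y \<in> A" using xy by blast
        then have "\<exists>X\<in>F. X \<subseteq> B \<union> A \<and> x \<in> X \<and> y \<in> X"
          using key[OF xB _ assms(3,2) c(2) c(1)] by simp
        then show ?thesis by (simp add: Un_commute)
      qed
    qed
  qed
qed

lemma singleton_conn:
  assumes "connectoid S F" "t \<in> S"
  shows "{t} \<in> conn_sets S F"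
proof -
  have "{t} \<in> F" using assms by (simp add: connectoid_def)
  show ?thesis unfolding conn_sets_def
  proof (intro CollectI conjI ballI)
    show "{t} \<subseteq> S" using assms(2) by simp
  next
    fix x y assume "x \<in> {t}" "y \<in> {t}"
    then show "\<exists>X\<in>F. X \<subseteq> {t} \<and> x \<in> X \<and> y \<in> X" using \<open>{t} \<in> F\<close> by (intro bexI[of _ "{t}"]) auto
  qed
qed

lemma comp_exists:
  assumes "connectoid S F" "t \<in> S'" "S' \<subseteq> S"
  shows "\<exists>K. K \<in> comps S F S' \<and> t \<in> K"
proof -
  define K where "K = \<Union>{C. C \<in> conn_sets S F \<and> C \<subseteq> S' \<and> t \<in> C}"
  have tS: "{t} \<in> conn_sets S F" using singleton_conn[OF assms(1)] assms(2,3) by blast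
  have tK: "t \<in> K" unfolding K_def
    by (rule UnionI[of "{t}"]) (use tS assms(2) in auto)
  have KS': "K \<subseteq> S'" unfolding K_def by blast
  have Kc: "K \<in> conn_sets S F" unfolding conn_sets_def
  proof (intro CollectI conjI ballI)
    show "K \<subseteq> S" using KS' assms(3) by (rule order_trans)
  next
    fix x y assume "x \<in> K" "y \<in> K"
    then obtain C1 C2 where C: "C1 \<in> conn_sets S F" "C1 \<subseteq> S'" "t \<in> C1" "x \<in> C1"
      "C2 \<in> conn_sets S F" "C2 \<subseteq> S'" "t \<in> C2" "y \<in> C2" unfolding K_def by auto
    have U: "C1 \<union> C2 \<in> conn_sets S F" using conn_union[OF assms(1) C(1) C(5)] C(3,7) by auto
    obtain X where X: "X \<in> F" "X \<subseteq> C1 \<union> C2" "x \<in> X" "y \<in> X"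
      using conn_setsD[OF U, of x y] C(4,8) by auto
    have "C1 \<union> C2 \<subseteq> K" unfolding K_def using U C(2,3,6) by auto
    then show "\<exists>X\<in>F. X \<subseteq> K \<and> x \<in> X \<and> y \<in> X" using X by (intro bexI[of _ X]) auto
  qed
  have "K \<in> comps S F S'" unfolding comps_def
  proof (intro CollectI conjI allI impI)
    fix K' assume h: "K \<subseteq> K' \<and> K' \<subseteq> S' \<and> K' \<in> conn_sets S F"
    then have "t \<in> K'" using tK by auto
    then have "K' \<subseteq> K" using h unfolding K_def by auto
    then show "K' = K" using h by auto
  qed (use tK KS' Kc in auto)
  then show ?thesis using tK by auto
qed

lemma comps_D:
  assumes "K \<in> comps S F S'"
  shows "K \<noteq> {}" "K \<subseteq> S'" "K \<in> conn_sets S F"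
    "\<And>K'. K \<subseteq> K' \<Longrightarrow> K' \<subseteq> S' \<Longrightarrow> K' \<in> conn_sets S F \<Longrightarrow> K' = K"
  using assms unfolding comps_def by auto

lemma comp_contains:
  assumes "connectoid S F" "K \<in> comps S F S'" "t \<in> K" "C \<in> conn_sets S F" "C \<subseteq> S'" "t \<in> C"
  shows "C \<subseteq> K"
proof -
  have U: "K \<union> C \<in> conn_sets S F" using conn_union[OF assms(1) comps_D(3)[OF assms(2)] assms(4)] assms(3,6) by auto
  have "K \<union> C = K" using comps_D(4)[OF assms(2) _ _ U] comps_D(2)[OF assms(2)] assms(5) by auto
  then show ?thesis by auto
qed

lemma K_tree_props:
  assumes "connectoid S F" "weak_normal_tree S F V E r" "t \<in> V"
  shows "K_tree S F V E r t \<in> comps S F (S - down_open V E r t) \<and> t \<in> K_tree S F V E r t"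
proof -
  have VS: "V \<subseteq> S" using assms(2) unfolding weak_normal_tree_def by simp
  have "t \<notin> down_open V E r t" unfolding down_open_def tree_lt_def by simp
  then have tin: "t \<in> S - down_open V E r t" using VS assms(3) by blast
  obtain K where K: "K \<in> comps S F (S - down_open V E r t)" "t \<in> K"
    using comp_exists[OF assms(1) tin] by blast
  have uniq: "K2 = K" if K2: "K2 \<in> comps S F (S - down_open V E r t)" "t \<in> K2" for K2
  proof -
    have "K2 \<subseteq> K" using comp_contains[OF assms(1) K comps_D(3)[OF K2(1)] comps_D(2)[OF K2(1)] K2(2)] .
    moreover have "K \<subseteq> K2" using comp_contains[OF assms(1) K2 comps_D(3)[OF K(1)] comps_D(2)[OF K(1)] K(2)] .
    ultimately show "K2 = K" by (rule antisym)
  qed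
  have "K_tree S F V E r t = K" unfolding K_tree_def
  proof (rule the_equality)
    show "K \<in> comps S F (S - down_open V E r t) \<and> t \<in> K" using K by simp
  next
    fix K2 assume "K2 \<in> comps S F (S - down_open V E r t) \<and> t \<in> K2"
    then show "K2 = K" using uniq by simp
  qed
  then show ?thesis using K by simp
qed



theorem proposition6p2:
  fixes S :: "'a set" and F :: "'a set set" and V :: "'a set"
    and E :: "'a \<Rightarrow> 'a \<Rightarrow> bool" and r :: 'a and K :: "'a set"
  assumes "connectoid S F"
    and "S \<in> conn_sets S F"
    and "weak_normal_tree S F V E r"
    and "K \<in> comps S F (S - V)"
  shows "finite_adhesion S F V K \<longleftrightarrow> finite (N_K S F V E r K)"
proof -
  note conn = assms(1) and wnt = assms(3) and Kc = assms(4)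
  have tree: "is_tree V E" using wnt unfolding weak_normal_tree_def rooted_tree_def by simp
  have VS: "V \<subseteq> S" using wnt unfolding weak_normal_tree_def by simp
  have prop1: "\<And>C u v. C \<in> conn_sets S F \<Longrightarrow> u \<in> C \<Longrightarrow> u \<in> V \<Longrightarrow> v \<in> C \<Longrightarrow> v \<in> V \<Longrightarrow>
      \<not> tree_le V E r u v \<Longrightarrow> \<not> tree_le V E r v u \<Longrightarrow>
      (\<exists>w\<in>C. tree_le V E r w u \<and> tree_le V E r w v)"
  proof -
    fix C u v assume h: "C \<in> conn_sets S F" "u \<in> C" "u \<in> V" "v \<in> C" "v \<in> V"
      "\<not> tree_le V E r u v" "\<not> tree_le V E r v u"
    have "\<forall>C\<in>conn_sets S F. \<forall>u\<in>C \<inter> V. \<forall>v\<in>C \<inter> V.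
        \<not> tree_le V E r u v \<and> \<not> tree_le V E r v u \<longrightarrow>
        (\<exists>w\<in>C. tree_le V E r w u \<and> tree_le V E r w v)"
      using wnt unfolding weak_normal_tree_def by simp
    then show "\<exists>w\<in>C. tree_le V E r w u \<and> tree_le V E r w v" using h by simp
  qed
  show ?thesis
  proof
    assume "finite_adhesion S F V K"
    then obtain X where X: "X \<subseteq> V" "finite X" "K \<in> comps S F (S - X)"
      unfolding finite_adhesion_def by auto
    have sub: "N_K S F V E r K \<subseteq> (\<Union>x\<in>X. {t. tree_le V E r t x})"
    proof
      fix t assume "t \<in> N_K S F V E r K"
      then have tV: "t \<in> V" and KKt: "K \<subseteq> K_tree S F V E r t" unfolding N_K_def by auto
      show "t \<in> (\<Union>x\<in>X. {t. tree_le V E r t x})"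
      proof (rule ccontr)
        assume "t \<notin> (\<Union>x\<in>X. {t. tree_le V E r t x})"
        then have nle: "\<And>x. x \<in> X \<Longrightarrow> \<not> tree_le V E r t x" by auto
        define Kt where "Kt = K_tree S F V E r t"
        have Ktc: "Kt \<in> comps S F (S - down_open V E r t)" and tKt: "t \<in> Kt"
          using K_tree_props[OF conn wnt tV] unfolding Kt_def by auto
        have KtD: "Kt \<subseteq> S - down_open V E r t" "Kt \<in> conn_sets S F"
          using comps_D[OF Ktc] by auto
        have disj: "Kt \<inter> X = {}"
        proof (rule ccontr)
          assume "Kt \<inter> X \<noteq> {}"
          then obtain s where s: "s \<in> Kt" "s \<in> X" by auto
          have sV: "s \<in> V" using s X(1) by auto
          have nts: "\<not> tree_le V E r t s" using nle s(2) by auto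
          show False
          proof (cases "tree_le V E r s t")
            case True
            then have "s \<noteq> t" using nts by auto
            then have "s \<in> down_open V E r t" using True sV unfolding down_open_def tree_lt_def by auto
            then show False using KtD(1) s(1) by auto
          next
            case False
            obtain w where w: "w \<in> Kt" "tree_le V E r w s" "tree_le V E r w t"
              using prop1[OF KtD(2) s(1) sV tKt tV False nts] by auto
            have "w \<noteq> t" using w(2) nts by auto
            then have "w \<in> down_open V E r t" using w(3) tree_le_V[OF w(3)]
              unfolding down_open_def tree_lt_def by auto
            then show False using KtD(1) w(1) by auto
          qed
        qed
        have "Kt \<subseteq> S - X" using KtD(1) disj by auto
        then have "Kt = K" using comps_D(4)[OF X(3) _ _ KtD(2)] KKt unfolding Kt_def by auto
        then show False using tKt tV comps_D(2)[OF Kc] by auto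
      qed
    qed
    have "finite (\<Union>x\<in>X. {t. tree_le V E r t x})"
      using X(2) tree_le_finite[OF tree] by auto
    then show "finite (N_K S F V E r K)" using sub finite_subset by blast
  next
    assume fin: "finite (N_K S F V E r K)"
    have NV: "N_K S F V E r K \<subseteq> V" unfolding N_K_def by auto
    have KD: "K \<noteq> {}" "K \<subseteq> S - V" "K \<in> conn_sets S F"
      using comps_D[OF Kc] by auto
    have "K \<in> comps S F (S - N_K S F V E r K)" unfolding comps_def
    proof (intro CollectI conjI allI impI)
      show "K \<noteq> {}" "K \<in> conn_sets S F" using KD by auto
      show "K \<subseteq> S - N_K S F V E r K" using KD(2) NV by auto
    next
      fix K' assume h: "K \<subseteq> K' \<and> K' \<subseteq> S - N_K S F V E r K \<and> K' \<in> conn_sets S F"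
      show "K' = K"
      proof (rule ccontr)
        assume ne: "K' \<noteq> K"
        have K'S: "K' \<subseteq> S" using h by auto
        have "K' \<inter> V \<noteq> {}"
        proof
          assume "K' \<inter> V = {}"
          then have "K' \<subseteq> S - V" using K'S by auto
          then have "K' = K" using comps_D(4)[OF Kc] h by auto
          then show False using ne by simp
        qed
        then obtain t0 where "t0 \<in> K' \<inter> V" by auto
        then obtain t where t: "t \<in> K' \<inter> V"
          and tmin: "\<And>y. y \<in> K' \<inter> V \<Longrightarrow> length (rpath V E r t) \<le> length (rpath V E r y)"
          using ex_has_least_nat[of "\<lambda>t. t \<in> K' \<inter> V" t0 "\<lambda>t. length (rpath V E r t)"] by blast
        have tV: "t \<in> V" and tK': "t \<in> K'" using t by auto
        have "K' \<inter> down_open V E r t = {}"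
        proof (rule ccontr)
          assume "K' \<inter> down_open V E r t \<noteq> {}"
          then obtain s where s: "s \<in> K'" "s \<in> V" "tree_lt V E r s t" unfolding down_open_def by auto
          have "length (rpath V E r s) < length (rpath V E r t)" using tree_lt_depth[OF tree s(3)] .
          moreover have "length (rpath V E r t) \<le> length (rpath V E r s)" using tmin s by auto
          ultimately show False by simp
        qed
        then have "K' \<subseteq> S - down_open V E r t" using K'S by auto
        then have "K' \<subseteq> K_tree S F V E r t"
          using K_tree_props[OF conn wnt tV] comp_contains[OF conn, of "K_tree S F V E r t" _ t K'] h tK'
          by auto
        then have "t \<in> N_K S F V E r K" unfolding N_K_def using h tV by auto
        then show False using h tK' by auto
      qed
    qed
    then show "finite_adhesion S F V K" unfolding finite_adhesion_def
      using fin NV by (intro exI[of _ "N_K S F V E r K"]) simp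
  qed
qed

end
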